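(* Let $S$ be a nonempty set of graphs on $\Pi$, $A$ the closed-above model generated by $S$, and $r>0$. Then $\mathrm{eqdom}(S^r)$-set agreement is solvable in $r$ rounds on $A$.
   Context: Fix $\Pi=\{p_1,\dots,p_n\}$. A graph is a directed graph on $\Pi$ containing all self-loops; $Out_G(p)=\{q:(p,q)\in E(G)\}$, $In_G(p)=\{q:(q,p)\in E(G)\}$, $Out_G(P)=\bigcup_{p\in P}Out_G(p)$. Computation proceeds in failure-free, communication-closed rounds: in round $r$ a graph $G_r$ is chosen and each $p$ receives the round-$r$ messages of the processes in $In_{G_r}(p)$. $\uparrow G=\{H:E(H)\supseteq E(G)\}$; the closed-above model generated by $S$ allows exactly the executions whose round graphs each lie in $\bigcup_{G\in S}\uparrow G$. In $k$-set agreement each process starts with an input from a totally ordered set $V_{in}$ and must decide a value so that every decided value is some process's input and at most $k$ distinct values are decided; it is solvable in $r$ rounds if some algorithm guarantees this, with all processes deciding after $r$ rounds, in every allowed execution and input assignment. $\mathrm{eqdom}(G)=\min\{i\in[1,n]:\forall P\subseteq\Pi,\ |P|=i\Rightarrow Out_G(P)=\Pi\}$ and $\mathrm{eqdom}(S)=\max_{G\in S}\mathrm{eqdom}(G)$. The graph path product $G\otimes H$ has edge set $\{(u,v):\exists w,\ (u,w)\in E(G)\wedge(w,v)\in E(H)\}$, and $S^r=\{G_1\otimes\cdots\otimes G_r: G_1,\dots,G_r\in S\}$. *)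

theory Defs
  imports Main
begin

text \<open>Processes are the elements of a finite type 'p (so Pi = UNIV, n = CARD('p)).
A graph is an edge relation on 'p containing all self-loops.\<close>

type_synonym 'p graph = "('p \<times> 'p) set"

definition is_graph :: "'p graph \<Rightarrow> bool" where
  "is_graph G \<longleftrightarrow> (\<forall>p. (p, p) \<in> G)"

definition Out :: "'p graph \<Rightarrow> 'p \<Rightarrow> 'p set" where
  "Out G p = {q. (p, q) \<in> G}"

definition In :: "'p graph \<Rightarrow> 'p \<Rightarrow> 'p set" where
  "In G p = {q. (q, p) \<in> G}"

definition OutSet :: "'p graph \<Rightarrow> 'p set \<Rightarrow> 'p set" where
  "OutSet G P = (\<Union>p\<in>P. Out G p)"

definition up :: "'p graph \<Rightarrow> 'p graph set" where
  "up G = {H. G \<subseteq> H}"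

definition closed_above :: "'p graph set \<Rightarrow> 'p graph set" where
  "closed_above S = (\<Union>G\<in>S. up G)"

definition eqdom :: "('p::finite) graph \<Rightarrow> nat" where
  "eqdom G = (LEAST i. i \<in> {1..card (UNIV :: 'p set)} \<and>
                (\<forall>P::'p set. card P = i \<longrightarrow> OutSet G P = UNIV))"

definition eqdom_set :: "('p::finite) graph set \<Rightarrow> nat" where
  "eqdom_set S = Max (eqdom ` S)"

definition gprod :: "'p graph \<Rightarrow> 'p graph \<Rightarrow> 'p graph" (infixl "\<otimes>\<^sub>g" 70) where
  "G \<otimes>\<^sub>g H = {(u, v). \<exists>w. (u, w) \<in> G \<and> (w, v) \<in> H}"

fun spow :: "'p graph set \<Rightarrow> nat \<Rightarrow> 'p graph set" where
  "spow S 0 = {Id}"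
| "spow S (Suc r) = {G \<otimes>\<^sub>g H | G H. G \<in> spow S r \<and> H \<in> S}"

text \<open>Round-based algorithms. States and messages are taken in the full-information
view type, which is general enough to encode the state of any deterministic algorithm.\<close>

datatype ('p, 'v) fiview =
    FInit 'p 'v
  | FStep nat 'p "('p, 'v) fiview" "'p \<Rightarrow> ('p, 'v) fiview option"

record ('p, 'v, 's, 'm) algorithm =
  init   :: "'p \<Rightarrow> 'v \<Rightarrow> 's"
  send   :: "nat \<Rightarrow> 'p \<Rightarrow> 's \<Rightarrow> 'm"
  trans  :: "nat \<Rightarrow> 'p \<Rightarrow> 's \<Rightarrow> ('p \<Rightarrow> 'm option) \<Rightarrow> 's"
  decide :: "'p \<Rightarrow> 's \<Rightarrow> 'v"

text \<open>State of process p after k rounds; gs k is the round-k graph (rounds 1,2,...).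
In round k, p receives the round-k message of exactly the processes in In (gs k) p.\<close>
fun run :: "('p, 'v, 's, 'm) algorithm \<Rightarrow> (nat \<Rightarrow> 'p graph) \<Rightarrow> ('p \<Rightarrow> 'v) \<Rightarrow> nat \<Rightarrow> 'p \<Rightarrow> 's" where
  "run A gs x 0 p = init A p (x p)"
| "run A gs x (Suc k) p =
     trans A (Suc k) p (run A gs x k p)
       (\<lambda>q. if q \<in> In (gs (Suc k)) p then Some (send A (Suc k) q (run A gs x k q)) else None)"

definition allowed_exec :: "'p graph set \<Rightarrow> (nat \<Rightarrow> 'p graph) \<Rightarrow> bool" where
  "allowed_exec M gs \<longleftrightarrow> (\<forall>i\<ge>1. gs i \<in> M)"

definition solves_kset :: "('p, 'v, 's, 'm) algorithm \<Rightarrow> nat \<Rightarrow> nat \<Rightarrow> 'p graph set \<Rightarrow> bool" where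
  "solves_kset A k r M \<longleftrightarrow>
     (\<forall>gs x. allowed_exec M gs \<longrightarrow>
        (let dec = (\<lambda>p. decide A p (run A gs x r p)) in
          (\<forall>p. dec p \<in> range x) \<and> card (range dec) \<le> k))"

definition kset_solvable :: "'v itself \<Rightarrow> nat \<Rightarrow> nat \<Rightarrow> ('p::finite) graph set \<Rightarrow> bool" where
  "kset_solvable (_ :: 'v itself) k r M \<longleftrightarrow>
     (\<exists>A :: ('p, 'v, ('p, 'v) fiview, ('p, 'v) fiview) algorithm. solves_kset A k r M)"

end

theory Submission
  imports Defs
begin

definition valv :: "('p,'v) fiview \<Rightarrow> 'v" where
  "valv s = (case s of FInit p v \<Rightarrow> v | FStep _ _ _ _ \<Rightarrow> undefined)"

definition alg :: "('p::finite, 'v::linorder, ('p,'v) fiview, ('p,'v) fiview) algorithm" where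
  "alg = (| init = (\<lambda>p v. FInit p v), send = (\<lambda>k p s. s),
     trans = (\<lambda>k p s msgs. FInit p (Min (insert (valv s) ((\<lambda>q. valv (the (msgs q))) ` {q. msgs q \<noteq> None})))),
     decide = (\<lambda>p s. valv s) |)"

lemma run_val_Suc:
  "valv (run alg gs x (Suc k) p) =
     Min (insert (valv (run alg gs x k p)) ((\<lambda>q. valv (run alg gs x k q)) ` In (gs (Suc k)) p))"
proof -
  have "{q. (if q \<in> In (gs (Suc k)) p then Some (run alg gs x k q) else None) \<noteq> None} = In (gs (Suc k)) p"
    by auto
  then show ?thesis
    by (simp add: alg_def valv_def cong: image_cong)
qed

lemma run_val_0: "valv (run alg gs x 0 p) = x p"
  by (simp add: alg_def valv_def)

fun reach :: "(nat \<Rightarrow> 'p graph) \<Rightarrow> nat \<Rightarrow> 'p graph" where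
  "reach gs 0 = Id"
| "reach gs (Suc k) = reach gs k \<otimes>\<^sub>g gs (Suc k)"

lemma inv_range: "valv (run alg gs x k (p::'p::finite)) \<in> range (x :: 'p \<Rightarrow> 'v::linorder)"
proof (induction k arbitrary: p)
  case 0 then show ?case by (simp add: alg_def valv_def)
next
  case (Suc k)
  let ?A = "insert (valv (run alg gs x k p)) ((\<lambda>q. valv (run alg gs x k q)) ` In (gs (Suc k)) p)"
  have "finite ?A" by simp
  hence "Min ?A \<in> ?A" by (intro Min_in) auto
  moreover have "?A \<subseteq> range x" using Suc by auto
  ultimately have "Min ?A \<in> range x" by blast
  then show ?case by (subst run_val_Suc)
qed

lemma inv_le: "(q, p) \<in> reach gs k \<Longrightarrow> valv (run alg gs x k (p::'p::finite)) \<le> (x q :: 'v::linorder)"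
proof (induction k arbitrary: p)
  case 0 then show ?case by (simp add: alg_def valv_def)
next
  case (Suc k)
  then obtain w where w: "(q, w) \<in> reach gs k" "(w, p) \<in> gs (Suc k)" by (auto simp: gprod_def)
  let ?A = "insert (valv (run alg gs x k p)) ((\<lambda>q. valv (run alg gs x k q)) ` In (gs (Suc k)) p)"
  have "finite ?A" by simp
  moreover have "valv (run alg gs x k w) \<in> ?A" using w(2) by (auto simp: In_def)
  ultimately have "Min ?A \<le> valv (run alg gs x k w)" by (rule Min_le)
  also have "\<dots> \<le> x q" using Suc.IH w(1) .
  finally show ?case by (subst run_val_Suc)
qed

lemma gprod_mono: "G \<subseteq> G' \<Longrightarrow> H \<subseteq> H' \<Longrightarrow> G \<otimes>\<^sub>g H \<subseteq> G' \<otimes>\<^sub>g H'"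
  by (auto simp: gprod_def)

lemma reach_sub:
  assumes "allowed_exec (closed_above S) gs"
  shows "\<exists>H\<in>spow S k. H \<subseteq> reach gs k"
proof (induction k)
  case 0 then show ?case by simp
next
  case (Suc k)
  then obtain H where H: "H \<in> spow S k" "H \<subseteq> reach gs k" by blast
  have "gs (Suc k) \<in> closed_above S" using assms by (simp add: allowed_exec_def)
  then obtain G where G: "G \<in> S" "G \<subseteq> gs (Suc k)" by (auto simp: closed_above_def up_def)
  have "H \<otimes>\<^sub>g G \<in> spow S (Suc k)" using H G by auto
  moreover have "H \<otimes>\<^sub>g G \<subseteq> reach gs (Suc k)" using H G by (simp add: gprod_mono)
  ultimately show ?case by blast
qed

lemma spow_graph: "\<forall>G\<in>S. is_graph G \<Longrightarrow> H \<in> spow S k \<Longrightarrow> is_graph H"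
proof (induction k arbitrary: H)
  case 0 then show ?case by (simp add: is_graph_def)
next
  case (Suc k)
  then show ?case by (auto simp: is_graph_def gprod_def)
qed

lemma eqdom_prop:
  fixes H :: "('p::finite) graph"
  assumes "is_graph H"
  shows "eqdom H \<le> card (UNIV :: 'p set) \<and> (\<forall>P::'p set. card P = eqdom H \<longrightarrow> OutSet H P = UNIV)"
proof -
  let ?n = "card (UNIV :: 'p set)"
  have ex: "?n \<in> {1..?n} \<and> (\<forall>P::'p set. card P = ?n \<longrightarrow> OutSet H P = UNIV)"
  proof
    show "?n \<in> {1..?n}" using finite_UNIV_card_ge_0[where ?'a='p] by (simp add: Suc_le_eq)
    show "\<forall>P::'p set. card P = ?n \<longrightarrow> OutSet H P = UNIV"
    proof (intro allI impI)
      fix P :: "'p set" assume "card P = ?n"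
      hence "P = UNIV" by (simp add: card_eq_UNIV_imp_eq_UNIV)
      thus "OutSet H P = UNIV" using assms by (auto simp: OutSet_def Out_def is_graph_def)
    qed
  qed
  have "eqdom H \<in> {1..?n} \<and> (\<forall>P::'p set. card P = eqdom H \<longrightarrow> OutSet H P = UNIV)"
    unfolding eqdom_def
    by (rule LeastI[where P="\<lambda>i. i \<in> {1..?n} \<and> (\<forall>P::'p set. card P = i \<longrightarrow> OutSet H P = UNIV)", OF ex])
  then show ?thesis by auto
qed

lemma smallest_set:
  fixes x :: "'p::finite \<Rightarrow> 'v::linorder"
  assumes "k \<le> card (UNIV :: 'p set)"
  shows "\<exists>P. card P = k \<and> (\<forall>q\<in>P. \<forall>q'. q' \<notin> P \<longrightarrow> x q \<le> x q')"
proof -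
  obtain xs where xs: "set xs = (UNIV :: 'p set)" "distinct xs"
    using finite_distinct_list[of "UNIV :: 'p set"] by auto
  let ?ys = "sort_key x xs"
  have d: "distinct ?ys" using xs by simp
  have sy: "set ?ys = UNIV" using xs by simp
  have len: "length ?ys = card (UNIV :: 'p set)" using xs distinct_card[of xs] by simp
  have srt: "sorted (map x ?ys)" by simp
  let ?P = "set (take k ?ys)"
  have "card ?P = k" using d len assms by (simp add: distinct_card)
  moreover have "\<forall>q\<in>?P. \<forall>q'. q' \<notin> ?P \<longrightarrow> x q \<le> x q'"
  proof (intro ballI allI impI)
    fix q q' assume q: "q \<in> ?P" and q': "q' \<notin> ?P"
    have "q' \<in> set (drop k ?ys)" using q' sy
      by (metis UNIV_I Un_iff append_take_drop_id set_append)
    moreover have "sorted_wrt (\<le>) (map x (take k ?ys) @ map x (drop k ?ys))"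
      using srt by (metis append_take_drop_id map_append)
    ultimately show "x q \<le> x q'" using q
      by (auto simp: sorted_wrt_append)
  qed
  ultimately show ?thesis by blast
qed

theorem theorem7:
  fixes S :: "('p::finite) graph set" and r :: nat
  assumes "S \<noteq> {}"
    and "\<forall>G\<in>S. is_graph G"
    and "r > 0"
  shows "kset_solvable TYPE('v::linorder) (eqdom_set (spow S r)) r (closed_above S)"
  unfolding kset_solvable_def
proof (rule exI[of _ alg])
  show "solves_kset alg (eqdom_set (spow S r)) r (closed_above S)"
  unfolding solves_kset_def Let_def
  proof (intro allI impI)
  fix gs x
  assume ex: "allowed_exec (closed_above S) gs"
  let ?dec = "\<lambda>p. decide alg p (run alg gs x r p)"
  have dec: "\<And>p. ?dec p = valv (run alg gs x r p)" by (simp add: alg_def)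
  have c1: "\<forall>p. ?dec p \<in> range x" using inv_range[of gs x r] by (simp add: dec)
  obtain H where H: "H \<in> spow S r" "H \<subseteq> reach gs r" using reach_sub[OF ex] by blast
  have gH: "is_graph H" using spow_graph[OF assms(2) H(1)] .
  have fin: "finite (spow S r)" by simp
  have kle: "eqdom H \<le> eqdom_set (spow S r)"
    unfolding eqdom_set_def using H(1) fin by (intro Max_ge) auto
  from eqdom_prop[OF gH] have k1: "eqdom H \<le> card (UNIV :: 'p set)"
    and k2: "\<And>P::'p set. card P = eqdom H \<Longrightarrow> OutSet H P = UNIV" by auto
  obtain P where P: "card P = eqdom H" "\<forall>q\<in>P. \<forall>q'. q' \<notin> P \<longrightarrow> x q \<le> x q'"
    using smallest_set[OF k1, of x] by blast
  have "range ?dec \<subseteq> x ` P"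
  proof
    fix v assume "v \<in> range ?dec"
    then obtain p where v: "v = ?dec p" by auto
    have "p \<in> OutSet H P" using k2[OF P(1)] by simp
    then obtain q where q: "q \<in> P" "(q, p) \<in> H" by (auto simp: OutSet_def Out_def)
    have le: "v \<le> x q" using inv_le[of q p gs r x] q(2) H(2) v dec by auto
    obtain q' where q': "v = x q'" using inv_range[of gs x r p] v dec by auto
    show "v \<in> x ` P"
    proof (cases "q' \<in> P")
      case True then show ?thesis using q' by auto
    next
      case False
      then have "x q \<le> x q'" using P(2) q(1) by blast
      then have "v = x q" using le q' by auto
      then show ?thesis using q(1) by auto
    qed
  qed
  then have "card (range ?dec) \<le> card (x ` P)" by (intro card_mono) auto
  also have "\<dots> \<le> card P" by (rule card_image_le) simp
  finally have "card (range ?dec) \<le> eqdom_set (spow S r)" using P(1) kle by simp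
  then show "(\<forall>p. ?dec p \<in> range x) \<and> card (range ?dec) \<le> eqdom_set (spow S r)" using c1 by blast
  qed
qed

end
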